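(* The set of $r\in Q_0$ for which $\lim_{n\to\infty}\frac{\tau(x^nr)}{n}=2$ has $\mu_0$-measure $1$.
   Context: $\mathbb{F}_2((x^{-1}))$ is the field of formal series $r=\sum_{z\in\mathbb{Z}}a_zx^z$, $a_z\in\mathbb{F}_2$, with $a_z\neq0$ for only finitely many positive $z$; $\deg(r)=\max\{z:a_z\ne0\}$; the polynomial part is $[r]=\sum_{z\ge0}a_zx^z$. Define $S(r)=\frac{r}{x+1}$ if $[r](1)=0$ and $S(r)=\frac{xr}{x+1}$ if $[r](1)=1$. For $r$ with $\deg(r)\ge0$, $\tau(r)$ is the least $k\in\mathbb{N}$ with $[S^k(r)]=1$ (finite). $Q_0=\{r:\deg(r)=0\}$, and $\mu_0$ is the probability measure on $Q_0$ under which the coefficients $a_{-1},a_{-2},\dots$ are independent and uniform in $\mathbb{F}_2$. *)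

theory Defs
  imports "HOL-Probability.Probability"
begin

text \<open>Elements of F_2((x^-1)) are represented by their coefficient functions
  a :: int => bool (a z = True iff the coefficient of x^z is 1).\<close>

type_synonym f2laurent = "int \<Rightarrow> bool"

definition is_f2laurent :: "f2laurent \<Rightarrow> bool" where
  "is_f2laurent a \<longleftrightarrow> finite {z. 0 < z \<and> a z}"

definition xpow_mult :: "nat \<Rightarrow> f2laurent \<Rightarrow> f2laurent" where
  "xpow_mult n a = (\<lambda>z. a (z - int n))"

text \<open>[r](1): the polynomial part evaluated at 1, i.e. the parity of the number of
  nonzero coefficients at nonnegative exponents.\<close>
definition polypart_at_1 :: "f2laurent \<Rightarrow> bool" where
  "polypart_at_1 a \<longleftrightarrow> odd (card {z. 0 \<le> z \<and> a z})"

text \<open>Division by (x+1): since 1/(x+1) = sum_{k>=1} x^(-k), the coefficient of x^z in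
  r/(x+1) is sum_{k>=1} a_(z+k) over F_2.\<close>
definition div_x_plus_1 :: "f2laurent \<Rightarrow> f2laurent" where
  "div_x_plus_1 a = (\<lambda>z. odd (card {k::int. 1 \<le> k \<and> a (z + k)}))"

definition S_map :: "f2laurent \<Rightarrow> f2laurent" where
  "S_map a = (if polypart_at_1 a then div_x_plus_1 (xpow_mult 1 a) else div_x_plus_1 a)"

definition polypart_is_1 :: "f2laurent \<Rightarrow> bool" where
  "polypart_is_1 a \<longleftrightarrow> (\<forall>z\<ge>0. a z = (z = 0))"

definition tau :: "f2laurent \<Rightarrow> nat" where
  "tau a = (LEAST k. polypart_is_1 ((S_map ^^ k) a))"

text \<open>Q_0 is parametrised by the coefficients a_{-1}, a_{-2}, ...: omega k = a_{-(k+1)}.\<close>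
definition Q0_elem :: "(nat \<Rightarrow> bool) \<Rightarrow> f2laurent" where
  "Q0_elem \<omega> = (\<lambda>z. z = 0 \<or> (z < 0 \<and> \<omega> (nat (- z) - 1)))"

definition mu0 :: "(nat \<Rightarrow> bool) measure" where
  "mu0 = PiM UNIV (\<lambda>_. measure_pmf (pmf_of_set (UNIV :: bool set)))"

end

theory Submission
  imports Defs "HOL-Library.FuncSet"
begin

fun V :: "(nat \<Rightarrow> bool) \<Rightarrow> nat \<Rightarrow> nat \<Rightarrow> bool" where
  "V \<omega> 0 i = (i = 0 \<or> \<omega> (i - 1))"
| "V \<omega> (Suc k) 0 = True"
| "V \<omega> (Suc k) (Suc i) = (V \<omega> (Suc k) i \<noteq> V \<omega> k (Suc i))"

lemma V_0 [simp]: "V \<omega> k 0"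
  by (cases k) auto

fun walk :: "(nat \<Rightarrow> bool) \<Rightarrow> nat \<Rightarrow> nat \<Rightarrow> nat" where
  "walk \<omega> h 0 = h"
| "walk \<omega> h (Suc k) = (if V \<omega> (Suc k) (walk \<omega> h k) then walk \<omega> h k else walk \<omega> h k - 1)"

lemma walk_Suc_le: "walk \<omega> h (Suc k) \<le> walk \<omega> h k"
  by auto

lemma walk_Suc_ge: "walk \<omega> h k - 1 \<le> walk \<omega> h (Suc k)"
  by auto

lemma walk_antimono: "k \<le> k' \<Longrightarrow> walk \<omega> h k' \<le> walk \<omega> h k"
proof (induction k' rule: dec_induct)
  case base then show ?case by simp
next
  case (step m) then show ?case using walk_Suc_le[of \<omega> h m] by linarith
qed

lemma walk_le: "walk \<omega> h k \<le> h"
  using walk_antimono[of 0 k \<omega> h] by simp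

lemma walk_lower: "h - k \<le> walk \<omega> h k"
proof (induction k)
  case 0 then show ?case by simp
next
  case (Suc k) then show ?case using walk_Suc_ge[of \<omega> h k] by linarith
qed

lemma walk_zero_after: "walk \<omega> h k = 0 \<Longrightarrow> k \<le> k' \<Longrightarrow> walk \<omega> h k' = 0"
  using walk_antimono[of k k' \<omega> h] by simp

lemma walk_mono_start: "h \<le> h' \<Longrightarrow> walk \<omega> h k \<le> walk \<omega> h' k"
proof (induction k)
  case 0 then show ?case by simp
next
  case (Suc k)
  show ?case
  proof (cases "walk \<omega> h k = walk \<omega> h' k")
    case True then show ?thesis by simp
  next
    case False
    with Suc have "walk \<omega> h k < walk \<omega> h' k" by simp
    then show ?thesis using walk_Suc_le[of \<omega> h k] walk_Suc_ge[of \<omega> h' k] by linarith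
  qed
qed

definition sh :: "nat \<Rightarrow> (nat \<Rightarrow> bool) \<Rightarrow> nat \<Rightarrow> bool" where
  "sh k0 \<omega> = (\<lambda>i. V \<omega> k0 (Suc i))"

lemma V_sh: "V (sh k0 \<omega>) k i = V \<omega> (k0 + k) i"
proof (induction k arbitrary: i)
  case 0 then show ?case by (cases i) (auto simp: sh_def)
next
  case (Suc k)
  then show ?case by (induction i) auto
qed

lemma walk_sh: "walk \<omega> h (k0 + k) = walk (sh k0 \<omega>) (walk \<omega> h k0) k"
  by (induction k) (auto simp: V_sh)

lemma V_dep: "(\<And>i. i < m \<Longrightarrow> \<omega> i = \<omega>' i) \<Longrightarrow> i \<le> m \<Longrightarrow> V \<omega> k i = V \<omega>' k i"
proof (induction k arbitrary: i)
  case 0 then show ?case by (cases i) auto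
next
  case (Suc k)
  then show ?case by (induction i) auto
qed

lemma walk_dep: "(\<And>i. i < h \<Longrightarrow> \<omega> i = \<omega>' i) \<Longrightarrow> walk \<omega> h k = walk \<omega>' h k"
proof (induction k)
  case 0 then show ?case by simp
next
  case (Suc k)
  have "V \<omega> (Suc k) (walk \<omega> h k) = V \<omega>' (Suc k) (walk \<omega> h k)"
    by (rule V_dep[of h]) (use Suc walk_le in auto)
  then show ?case using Suc by simp
qed

subsection \<open>Periodicity\<close>

lemma V_period: "V \<omega> (k + 2^M) i = (V \<omega> k i \<noteq> (2^M \<le> i \<and> V \<omega> (k + 2^M) (i - 2^M)))"
proof (induction M arbitrary: k i)
  case 0
  then show ?case by (cases i) auto
next
  case (Suc M)
  define N :: nat where "N = 2^M"
  have N2: "(2::nat)^Suc M = N + N" unfolding N_def by simp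
  have A: "V \<omega> (k + N + N) j = (V \<omega> (k + N) j \<noteq> (N \<le> j \<and> V \<omega> (k + N + N) (j - N)))" for j
    using Suc.IH[of "k + N" j] unfolding N_def by simp
  have B: "V \<omega> (k + N) j = (V \<omega> k j \<noteq> (N \<le> j \<and> V \<omega> (k + N) (j - N)))" for j
    using Suc.IH[of k j] unfolding N_def by simp
  have "V \<omega> (k + N + N) i = (V \<omega> k i \<noteq> (N + N \<le> i \<and> V \<omega> (k + N + N) (i - (N + N))))"
  proof (cases "i < N")
    case True
    then show ?thesis using A[of i] B[of i] by auto
  next
    case False
    show ?thesis
    proof (cases "i < N + N")
      case True
      have "V \<omega> (k + N + N) (i - N) = V \<omega> (k + N) (i - N)"
        using A[of "i - N"] True by auto
      then show ?thesis using A[of i] B[of i] True False by auto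
    next
      case False2: False
      have "V \<omega> (k + N + N) (i - N) = (V \<omega> (k + N) (i - N) \<noteq> V \<omega> (k + N + N) (i - (N + N)))"
        using A[of "i - N"] False2 by (auto simp: diff_diff_add)
      then show ?thesis using A[of i] B[of i] False False2 by auto
    qed
  qed
  then show ?case using N2 by (simp add: add.assoc)
qed

lemma V_period_lt: "i < 2^M \<Longrightarrow> V \<omega> (k + 2^M) i = V \<omega> k i"
  using V_period[of \<omega> k M i] by auto

lemma V_period_mult: "i < 2^M \<Longrightarrow> V \<omega> (k + j * 2^M) i = V \<omega> k i"
proof (induction j)
  case 0 then show ?case by simp
next
  case (Suc j)
  have "V \<omega> (k + Suc j * 2^M) i = V \<omega> (k + j * 2^M + 2^M) i" by (simp add: algebra_simps)
  also have "\<dots> = V \<omega> (k + j * 2^M) i" using V_period_lt[OF Suc.prems] .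
  finally show ?case using Suc by simp
qed

lemma V_col: "\<not> (\<forall>k\<ge>K. V \<omega> k (Suc h) = b)"
proof (induction h arbitrary: K b)
  case 0
  show ?case
  proof
    assume H: "\<forall>k\<ge>K. V \<omega> k (Suc 0) = b"
    have "V \<omega> (Suc K) (Suc 0) = (V \<omega> (Suc K) 0 \<noteq> V \<omega> K (Suc 0))" by simp
    with H[rule_format, of K] H[rule_format, of "Suc K"] show False by auto
  qed
next
  case (Suc h)
  show ?case
  proof
    assume H: "\<forall>k\<ge>K. V \<omega> k (Suc (Suc h)) = b"
    have "\<forall>k\<ge>Suc K. V \<omega> k (Suc h) = False"
    proof (intro allI impI)
      fix k assume "Suc K \<le> k"
      then obtain k' where k': "k = Suc k'" "K \<le> k'" by (cases k) auto
      have "V \<omega> (Suc k') (Suc (Suc h)) = (V \<omega> (Suc k') (Suc h) \<noteq> V \<omega> k' (Suc (Suc h)))" by simp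
      with H[rule_format, of k'] H[rule_format, of "Suc k'"] k' show "V \<omega> k (Suc h) = False" by auto
    qed
    with Suc.IH[of "Suc K" False] show False by blast
  qed
qed

lemma walk_descends:
  assumes c: "walk \<omega> h k0 = c" "1 \<le> c" "c < 2^M"
  shows "walk \<omega> h (k0 + 2^M) < c"
proof (rule ccontr)
  assume "\<not> walk \<omega> h (k0 + 2^M) < c"
  then have ge: "walk \<omega> h (k0 + 2^M) \<ge> c" by simp
  have eq: "walk \<omega> h (k0 + j) = c" if "j \<le> 2^M" for j
    using walk_antimono[of "k0 + j" "k0 + 2^M" \<omega> h] walk_antimono[of k0 "k0 + j" \<omega> h] that ge c
    by auto
  have tr: "V \<omega> (k0 + 1 + j) c" if "j < 2^M" for j
  proof (rule ccontr)
    assume nv: "\<not> V \<omega> (k0 + 1 + j) c"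
    have "walk \<omega> h (Suc (k0 + j)) = c - 1"
      using eq[of j] that nv by simp
    moreover have "walk \<omega> h (Suc (k0 + j)) = c" using eq[of "Suc j"] that by simp
    ultimately show False using c by simp
  qed
  have "\<forall>k\<ge>k0 + 1. V \<omega> k (Suc (c - 1)) = True"
  proof (intro allI impI)
    fix k assume "k0 + 1 \<le> k"
    then obtain j where j: "k = k0 + 1 + j" using le_Suc_ex by blast
    have "j = j mod 2^M + (j div 2^M) * 2^M" using div_mult_mod_eq[of j "2^M"] by linarith
    then have "k = (k0 + 1 + j mod 2^M) + (j div 2^M) * 2^M" using j by linarith
    then have "V \<omega> k c = V \<omega> (k0 + 1 + j mod 2^M) c"
      using V_period_mult[of c M \<omega> "k0 + 1 + j mod 2^M" "j div 2^M"] c by simp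
    also have "\<dots> = True" using tr[of "j mod 2^M"] by simp
    finally show "V \<omega> k (Suc (c - 1)) = True" using c by simp
  qed
  with V_col show False by blast
qed

lemma walk_reaches0:
  assumes "c < 2^M" "walk \<omega> h k0 \<le> c"
  shows "walk \<omega> h (k0 + c * 2^M) = 0"
  using assms
proof (induction c arbitrary: k0)
  case 0 then show ?case by simp
next
  case (Suc c)
  show ?case
  proof (cases "walk \<omega> h k0 \<le> c")
    case True
    then have "walk \<omega> h (k0 + c * 2^M) = 0" using Suc by simp
    then show ?thesis by (rule walk_zero_after) simp
  next
    case False
    then have w: "walk \<omega> h k0 = Suc c" using Suc by simp
    then have "walk \<omega> h (k0 + 2^M) < Suc c" using walk_descends[OF w] Suc by simp
    then have "walk \<omega> h (k0 + 2^M + c * 2^M) = 0" using Suc by simp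
    then show ?thesis by (simp add: add.assoc)
  qed
qed

lemma walk_bound: "h < 2^M \<Longrightarrow> walk \<omega> h (h * 2^M) = 0"
  using walk_reaches0[of h M \<omega> h 0] by simp

subsection \<open>Injectivity (Terras-type) results\<close>

definition Om :: "nat \<Rightarrow> (nat \<Rightarrow> bool) set" where
  "Om m = PiE {..<m} (\<lambda>_. UNIV)"

lemma finite_Om [simp]: "finite (Om m)"
  unfolding Om_def by (intro finite_PiE) auto

lemma card_Om: "card (Om m) = 2^m"
  unfolding Om_def by (subst card_PiE) auto

lemma V_back_row: "(\<And>i. i \<le> m \<Longrightarrow> V \<omega> (Suc k) i = V \<omega>' (Suc k) i) \<Longrightarrow> i \<le> m \<Longrightarrow> V \<omega> k i = V \<omega>' k i"
proof (cases i)
  case 0 then show ?thesis by simp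
next
  case (Suc j)
  assume H: "\<And>i. i \<le> m \<Longrightarrow> V \<omega> (Suc k) i = V \<omega>' (Suc k) i" and im: "i \<le> m"
  have "V \<omega> (Suc k) (Suc j) = (V \<omega> (Suc k) j \<noteq> V \<omega> k (Suc j))"
       "V \<omega>' (Suc k) (Suc j) = (V \<omega>' (Suc k) j \<noteq> V \<omega>' k (Suc j))" by simp_all
  with H[of j] H[of "Suc j"] im Suc show ?thesis by auto
qed

lemma V_back_rows: "(\<And>i. i \<le> m \<Longrightarrow> V \<omega> k i = V \<omega>' k i) \<Longrightarrow> i \<le> m \<Longrightarrow> V \<omega> 0 i = V \<omega>' 0 i"
proof (induction k arbitrary: i)
  case 0 then show ?case by simp
next
  case (Suc k)
  have "V \<omega> k j = V \<omega>' k j" if "j \<le> m" for j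
    by (rule V_back_row[of m]) (use Suc.prems that in auto)
  then show ?case using Suc by blast
qed

lemma V_tail:
  assumes sup: "\<And>i. N < i \<Longrightarrow> V \<omega> k i = V \<omega>' k i" and Ni: "N \<le> i"
  shows "(V \<omega> (Suc k) i \<noteq> V \<omega>' (Suc k) i) = (V \<omega> (Suc k) N \<noteq> V \<omega>' (Suc k) N)"
  using Ni
proof (induction i rule: dec_induct)
  case base then show ?case by simp
next
  case (step j)
  have "V \<omega> (Suc k) (Suc j) = (V \<omega> (Suc k) j \<noteq> V \<omega> k (Suc j))"
       "V \<omega>' (Suc k) (Suc j) = (V \<omega>' (Suc k) j \<noteq> V \<omega>' k (Suc j))" by simp_all
  moreover have "V \<omega> k (Suc j) = V \<omega>' k (Suc j)" using sup step by simp
  ultimately show ?case using step by auto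
qed

definition bits :: "nat \<Rightarrow> (nat \<Rightarrow> bool) \<Rightarrow> nat \<Rightarrow> bool" where
  "bits n \<omega> = restrict (\<lambda>j. V \<omega> (Suc j) (walk \<omega> n j)) {..<n}"

lemma bits_Om: "bits n \<omega> \<in> Om n"
  unfolding bits_def Om_def by auto

lemma terras_inj: "inj_on (bits n) (Om n)"
proof (rule inj_onI)
  fix \<omega> \<omega>' assume om: "\<omega> \<in> Om n" "\<omega>' \<in> Om n" and eqb: "bits n \<omega> = bits n \<omega>'"
  have bit: "V \<omega> (Suc k) (walk \<omega> n k) = V \<omega>' (Suc k) (walk \<omega>' n k)" if "k < n" for k
    using fun_cong[OF eqb, of k] that unfolding bits_def by simp
  have claim: "(\<forall>i. n - k < i \<longrightarrow> V \<omega> k i = V \<omega>' k i) \<and> walk \<omega> n k = walk \<omega>' n k" if "k \<le> n" for k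
    using that
  proof (induction k)
    case 0
    have "V \<omega> 0 i = V \<omega>' 0 i" if "n < i" for i
    proof -
      have "\<omega> (i - 1) = \<omega>' (i - 1)" using om that unfolding Om_def by (auto simp: PiE_def extensional_def)
      then show ?thesis by simp
    qed
    then show ?case by simp
  next
    case (Suc k)
    then have IH: "\<And>i. n - k < i \<Longrightarrow> V \<omega> k i = V \<omega>' k i" and we: "walk \<omega> n k = walk \<omega>' n k" by auto
    define w where "w = walk \<omega> n k"
    have wl: "n - k \<le> w" unfolding w_def by (rule walk_lower)
    have bw: "V \<omega> (Suc k) w = V \<omega>' (Suc k) w" using bit[of k] Suc.prems we unfolding w_def by simp
    have t: "(V \<omega> (Suc k) i \<noteq> V \<omega>' (Suc k) i) = (V \<omega> (Suc k) (n - k) \<noteq> V \<omega>' (Suc k) (n - k))"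
      if "n - k \<le> i" for i
      by (rule V_tail) (use IH that in auto)
    have "V \<omega> (Suc k) (n - k) = V \<omega>' (Suc k) (n - k)" using t[OF wl] bw by auto
    then have "V \<omega> (Suc k) i = V \<omega>' (Suc k) i" if "n - Suc k < i" for i
      using t[of i] that by auto
    moreover have "walk \<omega> n (Suc k) = walk \<omega>' n (Suc k)"
      using bw we unfolding w_def by simp
    ultimately show ?case by auto
  qed
  have rown: "V \<omega> n i = V \<omega>' n i" for i
    using claim[of n] by (cases i) auto
  have row0: "V \<omega> 0 i = V \<omega>' 0 i" for i
    by (rule V_back_rows[of i \<omega> n \<omega>']) (use rown in auto)
  have "\<omega> j = \<omega>' j" for j using row0[of "Suc j"] by simp
  then show "\<omega> = \<omega>'" by auto
qed

lemma inj_Om_bij: "inj_on f (Om n) \<Longrightarrow> (\<And>x. f x \<in> Om n) \<Longrightarrow> bij_betw f (Om n) (Om n)"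
proof -
  assume i: "inj_on f (Om n)" and m: "\<And>x. f x \<in> Om n"
  have s: "f ` Om n \<subseteq> Om n" using m by auto
  have c: "card (f ` Om n) = card (Om n)" using i by (rule card_image)
  have "f ` Om n = Om n" using card_seteq[OF finite_Om s] c by simp
  then show ?thesis using i unfolding bij_betw_def by simp
qed

lemma bij_card_filter: "bij_betw f A A \<Longrightarrow> card {x\<in>A. P (f x)} = card {x\<in>A. P x}"
proof -
  assume b: "bij_betw f A A"
  have "f ` {x\<in>A. P (f x)} = {x\<in>A. P x}"
    using b unfolding bij_betw_def by force
  moreover have "inj_on f {x\<in>A. P (f x)}"
    using b unfolding bij_betw_def by (auto intro: inj_on_subset)
  ultimately show ?thesis by (metis card_image)
qed

lemma walk_count: "k \<le> n \<Longrightarrow> walk \<omega> n k = n - k + card {j. j < k \<and> V \<omega> (Suc j) (walk \<omega> n j)}"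
proof (induction k)
  case 0 then show ?case by simp
next
  case (Suc k)
  then have IH: "walk \<omega> n k = n - k + card {j. j < k \<and> V \<omega> (Suc j) (walk \<omega> n j)}" by simp
  show ?case
  proof (cases "V \<omega> (Suc k) (walk \<omega> n k)")
    case True
    then have "{j. j < Suc k \<and> V \<omega> (Suc j) (walk \<omega> n j)} = insert k {j. j < k \<and> V \<omega> (Suc j) (walk \<omega> n j)}"
      by auto
    then have "card {j. j < Suc k \<and> V \<omega> (Suc j) (walk \<omega> n j)} = Suc (card {j. j < k \<and> V \<omega> (Suc j) (walk \<omega> n j)})"
      by simp
    then show ?thesis using IH True Suc.prems by simp
  next
    case False
    then have "{j. j < Suc k \<and> V \<omega> (Suc j) (walk \<omega> n j)} = {j. j < k \<and> V \<omega> (Suc j) (walk \<omega> n j)}"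
      using less_Suc_eq by auto
    then show ?thesis using IH False Suc.prems by simp
  qed
qed

lemma walk_n_ones: "walk \<omega> n n = card {j\<in>{..<n}. bits n \<omega> j}"
proof -
  have "{j\<in>{..<n}. bits n \<omega> j} = {j. j < n \<and> V \<omega> (Suc j) (walk \<omega> n j)}"
    unfolding bits_def by auto
  then show ?thesis using walk_count[of n n \<omega>] by simp
qed

lemma count_walk_ones:
  "card {\<omega>\<in>Om n. Q (walk \<omega> n n)} = card {b\<in>Om n. Q (card {j\<in>{..<n}. b j})}"
proof -
  have b: "bij_betw (bits n) (Om n) (Om n)"
    by (rule inj_Om_bij[OF terras_inj bits_Om])
  show ?thesis
    unfolding walk_n_ones using bij_card_filter[OF b, of "\<lambda>b. Q (card {j\<in>{..<n}. b j})"] by simp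
qed

definition shr :: "nat \<Rightarrow> nat \<Rightarrow> (nat \<Rightarrow> bool) \<Rightarrow> nat \<Rightarrow> bool" where
  "shr m k0 \<omega> = restrict (sh k0 \<omega>) {..<m}"

lemma shr_Om: "shr m k0 \<omega> \<in> Om m"
  unfolding shr_def Om_def by auto

lemma shr_inj: "inj_on (shr m k0) (Om m)"
proof (rule inj_onI)
  fix \<omega> \<omega>' assume om: "\<omega> \<in> Om m" "\<omega>' \<in> Om m" and eq: "shr m k0 \<omega> = shr m k0 \<omega>'"
  have "V \<omega> k0 i = V \<omega>' k0 i" if "i \<le> m" for i
  proof (cases i)
    case 0 then show ?thesis by simp
  next
    case (Suc j)
    then have "j < m" using that by simp
    then show ?thesis using fun_cong[OF eq, of j] Suc unfolding shr_def sh_def by simp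
  qed
  then have "V \<omega> 0 i = V \<omega>' 0 i" if "i \<le> m" for i
    using V_back_rows[of m \<omega> k0 \<omega>' i] that by blast
  then have "\<omega> j = \<omega>' j" if "j < m" for j
  proof -
    have "V \<omega> 0 (Suc j) = V \<omega>' 0 (Suc j)" using that by (intro \<open>\<And>i. i \<le> m \<Longrightarrow> V \<omega> 0 i = V \<omega>' 0 i\<close>) simp
    then show ?thesis by simp
  qed
  moreover have "\<omega> j = \<omega>' j" if "\<not> j < m" for j
    using om that unfolding Om_def by (auto simp: PiE_def extensional_def)
  ultimately show "\<omega> = \<omega>'" by (intro ext) (case_tac "x < m", simp_all)
qed

definition dep :: "nat \<Rightarrow> ((nat \<Rightarrow> bool) \<Rightarrow> 'a) \<Rightarrow> bool" where
  "dep m E \<longleftrightarrow> (\<forall>\<omega> \<omega>'. (\<forall>i<m. \<omega> i = \<omega>' i) \<longrightarrow> E \<omega> = E \<omega>')"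

lemma sh_dep: "i < m \<Longrightarrow> (\<And>j. j < m \<Longrightarrow> \<omega> j = \<omega>' j) \<Longrightarrow> sh k0 \<omega> i = sh k0 \<omega>' i"
  unfolding sh_def by (rule V_dep[of m]) auto

lemma count_shift:
  assumes "dep m E"
  shows "card {\<omega>\<in>Om m. E (sh k0 \<omega>)} = card {\<omega>\<in>Om m. E \<omega>}"
proof -
  have b: "bij_betw (shr m k0) (Om m) (Om m)"
    by (rule inj_Om_bij[OF shr_inj shr_Om])
  have "E (sh k0 \<omega>) = E (shr m k0 \<omega>)" for \<omega>
    using assms unfolding dep_def shr_def by auto
  then show ?thesis using bij_card_filter[OF b, of E] by simp
qed

definition w :: "(nat \<Rightarrow> bool) \<Rightarrow> nat \<Rightarrow> f2laurent" where
  "w \<omega> k = (div_x_plus_1 ^^ k) (Q0_elem \<omega>)"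

lemma div_xpow: "div_x_plus_1 (xpow_mult m b) = xpow_mult m (div_x_plus_1 b)"
  unfolding div_x_plus_1_def xpow_mult_def by (simp add: algebra_simps)

lemma xpow_xpow: "xpow_mult a (xpow_mult b s) = xpow_mult (a + b) s"
  unfolding xpow_mult_def by (simp add: algebra_simps)

lemma V_prefix: "V \<omega> (Suc k) i = odd (card {l. l \<le> i \<and> V \<omega> k l})"
proof (induction i)
  case 0
  have "{l. l \<le> 0 \<and> V \<omega> k l} = {0}" by auto
  then show ?case by simp
next
  case (Suc i)
  show ?case
  proof (cases "V \<omega> k (Suc i)")
    case True
    then have "{l. l \<le> Suc i \<and> V \<omega> k l} = insert (Suc i) {l. l \<le> i \<and> V \<omega> k l}" by (auto simp: le_Suc_eq)
    then have "card {l. l \<le> Suc i \<and> V \<omega> k l} = Suc (card {l. l \<le> i \<and> V \<omega> k l})" by simp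
    then show ?thesis using Suc True by simp
  next
    case False
    then have "{l. l \<le> Suc i \<and> V \<omega> k l} = {l. l \<le> i \<and> V \<omega> k l}" by (auto simp: le_Suc_eq)
    then show ?thesis using Suc False by simp
  qed
qed

lemma card_int_window:
  "card {z::int. a \<le> z \<and> z \<le> a + int i \<and> P (nat (a + int i - z))} = card {l. l \<le> i \<and> P l}"
proof -
  have "{z::int. a \<le> z \<and> z \<le> a + int i \<and> P (nat (a + int i - z))} = (\<lambda>l. a + int i - int l) ` {l. l \<le> i \<and> P l}"
  proof (intro set_eqI iffI)
    fix z assume "z \<in> {z::int. a \<le> z \<and> z \<le> a + int i \<and> P (nat (a + int i - z))}"
    then have z: "a \<le> z" "z \<le> a + int i" "P (nat (a + int i - z))" by auto
    then have "z = a + int i - int (nat (a + int i - z))" "nat (a + int i - z) \<le> i" by auto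
    with z show "z \<in> (\<lambda>l. a + int i - int l) ` {l. l \<le> i \<and> P l}" by blast
  qed auto
  moreover have "inj_on (\<lambda>l. a + int i - int l) {l. l \<le> i \<and> P l}" by (auto simp: inj_on_def)
  ultimately show ?thesis by (simp add: card_image)
qed

lemma w_0: "w \<omega> 0 = Q0_elem \<omega>" by (simp add: w_def)

lemma w_Suc: "w \<omega> (Suc k) = div_x_plus_1 (w \<omega> k)" by (simp add: w_def)

lemma w_eq: "w \<omega> k z = (z \<le> - int k \<and> V \<omega> k (nat (- z - int k)))"
proof (induction k arbitrary: z)
  case 0
  show ?case unfolding w_0 Q0_elem_def
    by (cases "z < 0") (auto simp: nat_eq_iff)
next
  case (Suc k)
  have "w \<omega> (Suc k) z = odd (card {j. 1 \<le> j \<and> w \<omega> k (z + j)})"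
    by (simp add: w_Suc div_x_plus_1_def)
  also have "{j. 1 \<le> j \<and> w \<omega> k (z + j)} = {j. 1 \<le> j \<and> z + j \<le> - int k \<and> V \<omega> k (nat (- (z + j) - int k))}"
    using Suc.IH by auto
  finally have e: "w \<omega> (Suc k) z = odd (card {j. 1 \<le> j \<and> z + j \<le> - int k \<and> V \<omega> k (nat (- (z + j) - int k))})" .
  show ?case
  proof (cases "z \<le> - int (Suc k)")
    case False
    then have "{j. 1 \<le> j \<and> z + j \<le> - int k \<and> V \<omega> k (nat (- (z + j) - int k))} = {}" by auto
    then have "card {j. 1 \<le> j \<and> z + j \<le> - int k \<and> V \<omega> k (nat (- (z + j) - int k))} = 0" by (simp only: card.empty)
    with e have "\<not> w \<omega> (Suc k) z" by (simp only: odd_card_imp_not_empty) simp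
    then show ?thesis using False by simp
  next
    case True
    define i where "i = nat (- z - int (Suc k))"
    have zi: "- z - int k = 1 + int i" using True unfolding i_def by simp
    have "{j. 1 \<le> j \<and> z + j \<le> - int k \<and> V \<omega> k (nat (- (z + j) - int k))}
        = {j::int. 1 \<le> j \<and> j \<le> 1 + int i \<and> V \<omega> k (nat (1 + int i - j))}"
      using zi by (intro Collect_cong) (auto simp: algebra_simps)
    also have "card \<dots> = card {l. l \<le> i \<and> V \<omega> k l}"
      by (rule card_int_window)
    finally have "w \<omega> (Suc k) z = V \<omega> (Suc k) i" using e V_prefix by simp
    moreover have "nat (- z - int (Suc k)) = i" unfolding i_def ..
    ultimately show ?thesis using True by simp
  qed
qed

lemma S_xpow_w:
  "S_map (xpow_mult D (w \<omega> k)) = xpow_mult (D + (if polypart_at_1 (xpow_mult D (w \<omega> k)) then 1 else 0)) (w \<omega> (Suc k))"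
  unfolding S_map_def by (simp add: xpow_xpow div_xpow w_Suc)

lemma pp1_xpow_w:
  assumes "k \<le> D"
  shows "polypart_at_1 (xpow_mult D (w \<omega> k)) = V \<omega> (Suc k) (D - k)"
proof -
  have "{z. 0 \<le> z \<and> xpow_mult D (w \<omega> k) z} = {z::int. 0 \<le> z \<and> z \<le> 0 + int (D - k) \<and> V \<omega> k (nat (0 + int (D - k) - z))}"
    using assms by (auto simp: xpow_mult_def w_eq algebra_simps of_nat_diff)
  then have "card {z. 0 \<le> z \<and> xpow_mult D (w \<omega> k) z} = card {l. l \<le> D - k \<and> V \<omega> k l}"
    using card_int_window[of 0 "D - k" "V \<omega> k"] by simp
  then show ?thesis unfolding polypart_at_1_def V_prefix by simp
qed

lemma pis1_xpow_w:
  assumes "k \<le> D"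
  shows "polypart_is_1 (xpow_mult D (w \<omega> k)) = (D = k)"
proof
  assume H: "polypart_is_1 (xpow_mult D (w \<omega> k))"
  show "D = k"
  proof (rule ccontr)
    assume "D \<noteq> k"
    then have "int D - int k > 0" using assms by simp
    with H have "xpow_mult D (w \<omega> k) (int D - int k) = False" unfolding polypart_is_1_def by auto
    then show False by (simp add: xpow_mult_def w_eq)
  qed
next
  assume "D = k"
  then show "polypart_is_1 (xpow_mult D (w \<omega> k))"
    unfolding polypart_is_1_def by (auto simp: xpow_mult_def w_eq)
qed

lemma S_iter:
  "(S_map ^^ k) (xpow_mult n (Q0_elem \<omega>)) = xpow_mult (k + walk \<omega> n k) (w \<omega> k)"
proof (induction k)
  case 0 then show ?case by (simp add: w_0)
next
  case (Suc k)
  define h where "h = walk \<omega> n k"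
  have "(S_map ^^ Suc k) (xpow_mult n (Q0_elem \<omega>)) = S_map (xpow_mult (k + h) (w \<omega> k))"
    using Suc h_def by simp
  also have "\<dots> = xpow_mult (k + h + (if V \<omega> (Suc k) h then 1 else 0)) (w \<omega> (Suc k))"
    using S_xpow_w[of "k + h" \<omega> k] pp1_xpow_w[of k "k + h" \<omega>] by simp
  also have "k + h + (if V \<omega> (Suc k) h then 1 else 0) = Suc k + walk \<omega> n (Suc k)"
  proof (cases "V \<omega> (Suc k) h")
    case True then show ?thesis by (simp add: h_def)
  next
    case False
    then have "h \<noteq> 0" by (metis V_0)
    then show ?thesis using False by (simp add: h_def)
  qed
  finally show ?case .
qed

theorem tau_walk: "tau (xpow_mult n (Q0_elem \<omega>)) = (LEAST k. walk \<omega> n k = 0)"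
  unfolding tau_def S_iter
  by (subst pis1_xpow_w) simp_all

abbreviation M0 :: "bool measure" where
  "M0 \<equiv> measure_pmf (pmf_of_set (UNIV :: bool set))"

interpretation P0: product_prob_space "\<lambda>_::nat. M0" UNIV
  by unfold_locales

lemma mu0_eq: "mu0 = PiM UNIV (\<lambda>_::nat. M0)" unfolding mu0_def ..

lemma space_mu0 [simp]: "space mu0 = UNIV"
  unfolding mu0_eq by (simp add: space_PiM)

lemma prob_space_mu0: "prob_space mu0"
  unfolding mu0_eq by (rule P0.prob_space_axioms)

lemma emeasure_single_Om:
  assumes f: "f \<in> Om m"
  shows "emeasure (PiM {..<m} (\<lambda>_. M0)) {f} = ennreal ((1/2)^m)"
proof -
  have "{f} = PiE {..<m} (\<lambda>i. {f i})"
    using f unfolding Om_def by (intro PiE_singleton[symmetric]) (auto simp: PiE_def)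
  then have "emeasure (PiM {..<m} (\<lambda>_. M0)) {f} = (\<Prod>i<m. emeasure M0 {f i})"
    by (simp add: P0.emeasure_PiM)
  also have "\<dots> = (\<Prod>i<m. ennreal (1/2))"
    by (intro prod.cong refl) (simp add: emeasure_pmf_single)
  also have "\<dots> = ennreal (1/2) ^ m" by (simp only: prod_constant card_lessThan)
  also have "\<dots> = ennreal ((1/2)^m)" by (rule ennreal_power) simp
  finally show ?thesis .
qed

lemma sets_Om_subset:
  assumes "X \<subseteq> Om m"
  shows "X \<in> sets (PiM {..<m} (\<lambda>_. M0))"
proof -
  have fin: "finite X" using assms finite_Om finite_subset by blast
  have "{f} \<in> sets (PiM {..<m} (\<lambda>_. M0))" if "f \<in> X" for f
  proof -
    have "{f} = PiE {..<m} (\<lambda>i. {f i})"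
      using that assms unfolding Om_def by (intro PiE_singleton[symmetric]) (auto simp: PiE_def)
    then show ?thesis by (auto intro!: sets_PiM_I_finite)
  qed
  then have "(\<Union>f\<in>X. {f}) \<in> sets (PiM {..<m} (\<lambda>_. M0))"
    using fin by (intro sets.finite_UN) auto
  then show ?thesis by simp
qed

lemma cyl:
  assumes d: "dep m E"
  shows "{\<omega> \<in> space mu0. E \<omega>} \<in> sets mu0"
    and "measure mu0 {\<omega> \<in> space mu0. E \<omega>} = card {f \<in> Om m. E f} / 2^m"
proof -
  define X where "X = {f \<in> Om m. E f}"
  have XO: "X \<subseteq> Om m" unfolding X_def by auto
  have eq: "{\<omega> \<in> space mu0. E \<omega>} = prod_emb UNIV (\<lambda>_. M0) {..<m} X"
  proof -
    have "E (restrict \<omega> {..<m}) = E \<omega>" for \<omega>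
      using d unfolding dep_def by auto
    then show ?thesis
      unfolding X_def Om_def prod_emb_def by (auto simp: space_PiM)
  qed
  have Xs: "X \<in> sets (PiM {..<m} (\<lambda>_. M0))" by (rule sets_Om_subset[OF XO])
  have "prod_emb UNIV (\<lambda>_. M0) {..<m} X \<in> sets (PiM UNIV (\<lambda>_::nat. M0))"
    by (rule measurable_prod_emb) (use Xs in auto)
  then show "{\<omega> \<in> space mu0. E \<omega>} \<in> sets mu0" using eq mu0_eq by simp
  have "emeasure (PiM UNIV (\<lambda>_::nat. M0)) (prod_emb UNIV (\<lambda>_. M0) {..<m} X) = emeasure (PiM {..<m} (\<lambda>_. M0)) X"
    by (rule P0.emeasure_PiM_emb') (use Xs in auto)
  then have "emeasure mu0 {\<omega> \<in> space mu0. E \<omega>} = emeasure (PiM {..<m} (\<lambda>_. M0)) X"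
    using eq mu0_eq by simp
  also have "\<dots> = (\<Sum>f\<in>X. emeasure (PiM {..<m} (\<lambda>_. M0)) {f})"
    by (rule emeasure_eq_sum_singleton) (use XO finite_subset[OF XO] sets_Om_subset[of _ m] in auto)
  also have "\<dots> = (\<Sum>f\<in>X. ennreal ((1/2)^m))"
    by (intro sum.cong refl emeasure_single_Om) (use XO in auto)
  also have "\<dots> = ennreal (\<Sum>f\<in>X. (1/2)^m)"
    by (rule sum_ennreal) simp
  also have "(\<Sum>f\<in>X. (1/2::real)^m) = card X / 2^m"
    by (simp add: power_one_over)
  finally have "emeasure mu0 {\<omega> \<in> space mu0. E \<omega>} = ennreal (card X / 2^m)" .
  then show "measure mu0 {\<omega> \<in> space mu0. E \<omega>} = card {f \<in> Om m. E f} / 2^m"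
    unfolding measure_def X_def by simp
qed

lemma binom_count:
  "measure_pmf.prob (binomial_pmf n (1/2)) {x. Q x} = card {b \<in> Om n. Q (card {j\<in>{..<n}. b j})} / 2^n"
proof -
  have "binomial_pmf n (1/2) = map_pmf (\<lambda>f. card {x\<in>{..<n}. f x}) (Pi_pmf {..<n} undefined (\<lambda>_. bernoulli_pmf (1/2)))"
    by (rule binomial_pmf_altdef') auto
  also have "Pi_pmf {..<n} undefined (\<lambda>_. bernoulli_pmf (1/2)) = pmf_of_set (PiE_dflt {..<n} undefined (\<lambda>_. UNIV))"
    by (simp add: bernoulli_pmf_half_conv_pmf_of_set Pi_pmf_of_set)
  also have "PiE_dflt {..<n} undefined (\<lambda>_. UNIV) = Om n"
    unfolding PiE_dflt_def Om_def PiE_def extensional_def by auto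
  finally have e: "binomial_pmf n (1/2) = map_pmf (\<lambda>f. card {x\<in>{..<n}. f x}) (pmf_of_set (Om n))" .
  have ne: "Om n \<noteq> {}" using card_Om[of n] by (metis card.empty power_not_zero zero_neq_numeral)
  have "measure_pmf.prob (binomial_pmf n (1/2)) {x. Q x} = measure_pmf.prob (pmf_of_set (Om n)) ((\<lambda>f. card {x\<in>{..<n}. f x}) -` {x. Q x})"
    unfolding e by simp
  also have "\<dots> = card (Om n \<inter> ((\<lambda>f. card {x\<in>{..<n}. f x}) -` {x. Q x})) / card (Om n)"
    using ne by (simp add: measure_pmf_of_set)
  also have "Om n \<inter> ((\<lambda>f. card {x\<in>{..<n}. f x}) -` {x. Q x}) = {b \<in> Om n. Q (card {j\<in>{..<n}. b j})}" by auto
  finally show ?thesis by (simp add: card_Om)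
qed

definition pr :: "((nat \<Rightarrow> bool) \<Rightarrow> bool) \<Rightarrow> real" where
  "pr E = measure mu0 {\<omega> \<in> space mu0. E \<omega>}"

lemma dep_walk: "dep n (\<lambda>\<omega>. P (walk \<omega> n k))"
  unfolding dep_def using walk_dep by metis

lemma pr_walk_count: "pr (\<lambda>\<omega>. Q (walk \<omega> n n)) = measure_pmf.prob (binomial_pmf n (1/2)) {x. Q x}"
proof -
  have "pr (\<lambda>\<omega>. Q (walk \<omega> n n)) = card {f\<in>Om n. Q (walk f n n)} / 2^n"
    unfolding pr_def by (rule cyl(2)[OF dep_walk])
  also have "\<dots> = card {b \<in> Om n. Q (card {j\<in>{..<n}. b j})} / 2^n"
    using count_walk_ones[where Q=Q and n=n] by simp
  finally show ?thesis using binom_count[where Q=Q and n=n] by simp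
qed

lemma exp_neg_le: "(x::real) > 0 \<Longrightarrow> exp (- x) \<le> 1 / x"
proof -
  assume x: "x > 0"
  have "x \<le> exp x" using exp_ge_add_one_self[of x] by linarith
  then have "1 / exp x \<le> 1 / x" using x by (intro divide_left_mono) auto
  then show ?thesis by (simp add: exp_minus field_simps)
qed

definition up :: "nat \<Rightarrow> nat \<Rightarrow> nat" where "up q n = (q + 2) * n div (2 * q)"
definition lo :: "nat \<Rightarrow> nat \<Rightarrow> nat" where "lo q n = ((q - 2) * n + 2 * q - 1) div (2 * q)"

lemma level_up:
  assumes q: "q \<ge> 3" and n: "n \<ge> 1"
  shows "pr (\<lambda>\<omega>. up q n < walk \<omega> n n) \<le> real q ^ 2 / (2 * n)"
proof -
  interpret binomial_distribution n "1/2" by unfold_locales auto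
  have "pr (\<lambda>\<omega>. up q n < walk \<omega> n n) = measure_pmf.prob (binomial_pmf n (1/2)) {x. up q n < x}"
    by (rule pr_walk_count)
  also have "\<dots> \<le> measure_pmf.prob (binomial_pmf n (1/2)) {x. x / n \<ge> 1/2 + 1/q}"
  proof (rule measure_pmf.finite_measure_mono)
    show "{x. up q n < x} \<subseteq> {x. x / n \<ge> 1/2 + 1/q}"
    proof
      fix x assume "x \<in> {x. up q n < x}"
      then have "up q n + 1 \<le> x" by simp
      moreover have "(q + 2) * n < up q n * (2 * q) + 2 * q"
      proof -
        have r: "(q+2)*n mod (2*q) < 2*q" using q by simp
        have "(q+2)*n = up q n * (2*q) + (q+2)*n mod (2*q)" unfolding up_def by (rule div_mult_mod_eq[symmetric])
        then show ?thesis using r by linarith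
      qed
      moreover have "(up q n + 1) * (2 * q) \<le> x * (2 * q)"
        using \<open>up q n + 1 \<le> x\<close> by (rule mult_le_mono1)
      ultimately have "(q + 2) * n < x * (2 * q)"
        by (simp add: algebra_simps)
      then have "real (q + 2) * n < x * (2 * q)" by (metis of_nat_less_iff of_nat_mult)
      then have "(1/2 + 1/q) * n \<le> x" using q by (simp add: field_simps)
      then show "x \<in> {x. x / n \<ge> 1/2 + 1/q}" using n by (simp add: field_simps)
    qed
  qed simp
  also have "\<dots> \<le> exp (- 2 * n * (1/q)^2)"
    by (rule prob_ge') (use n in auto)
  also have "\<dots> \<le> 1 / (2 * n * (1/q)^2)"
    using exp_neg_le[of "2 * n * (1/q)^2"] n q by simp
  also have "\<dots> = real q ^ 2 / (2 * n)" by (simp add: field_simps)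
  finally show ?thesis .
qed

lemma fm_mu0: "finite_measure mu0"
  using prob_space_mu0 by (simp add: prob_space_def)

lemma pr_sets: "dep m A \<Longrightarrow> {\<omega> \<in> space mu0. A \<omega>} \<in> sets mu0"
  by (rule cyl(1))

lemma pr_union:
  assumes "dep m1 A" "dep m2 B"
  shows "pr (\<lambda>\<omega>. A \<omega> \<or> B \<omega>) \<le> pr A + pr B"
proof -
  interpret finite_measure mu0 by (rule fm_mu0)
  have sA: "{\<omega> \<in> space mu0. A \<omega>} \<in> sets mu0" and sB: "{\<omega> \<in> space mu0. B \<omega>} \<in> sets mu0"
    using pr_sets assms by blast+
  have e: "{\<omega> \<in> space mu0. A \<omega> \<or> B \<omega>} = {\<omega> \<in> space mu0. A \<omega>} \<union> {\<omega> \<in> space mu0. B \<omega>}" by auto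
  have "measure mu0 ({\<omega> \<in> space mu0. A \<omega>} \<union> {\<omega> \<in> space mu0. B \<omega>}) = measure mu0 {\<omega> \<in> space mu0. A \<omega>} + measure mu0 ({\<omega> \<in> space mu0. B \<omega>} - {\<omega> \<in> space mu0. A \<omega>})"
    by (rule measure_Un2) (use sA sB in \<open>auto simp: fmeasurable_def less_top[symmetric]\<close>)
  also have "measure mu0 ({\<omega> \<in> space mu0. B \<omega>} - {\<omega> \<in> space mu0. A \<omega>}) \<le> measure mu0 {\<omega> \<in> space mu0. B \<omega>}"
    by (rule finite_measure_mono) (use sB in auto)
  finally have "measure mu0 ({\<omega> \<in> space mu0. A \<omega>} \<union> {\<omega> \<in> space mu0. B \<omega>}) \<le> measure mu0 {\<omega> \<in> space mu0. A \<omega>} + measure mu0 {\<omega> \<in> space mu0. B \<omega>}" by simp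
  then show ?thesis unfolding pr_def e .
qed

lemma pr_mono:
  assumes "dep m B" "\<And>\<omega>. A \<omega> \<Longrightarrow> B \<omega>"
  shows "pr A \<le> pr B"
proof -
  interpret finite_measure mu0 by (rule fm_mu0)
  show ?thesis unfolding pr_def
    by (rule finite_measure_mono) (use assms pr_sets in auto)
qed

lemma pr_false: "(\<And>\<omega>. \<not> A \<omega>) \<Longrightarrow> pr A = 0"
  unfolding pr_def by simp

lemma pr_nonneg: "pr A \<ge> 0"
  unfolding pr_def by simp

lemma dep_sh: "dep m E \<Longrightarrow> dep m (\<lambda>\<omega>. E (sh k0 \<omega>))"
proof -
  assume d: "dep m E"
  show ?thesis unfolding dep_def
  proof (intro allI impI)
    fix \<omega> \<omega>' :: "nat \<Rightarrow> bool" assume a: "\<forall>i<m. \<omega> i = \<omega>' i"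
    have "\<forall>i<m. sh k0 \<omega> i = sh k0 \<omega>' i"
    proof (intro allI impI)
      fix i assume "i < m"
      then show "sh k0 \<omega> i = sh k0 \<omega>' i" by (rule sh_dep) (use a in simp)
    qed
    then show "E (sh k0 \<omega>) = E (sh k0 \<omega>')" using d unfolding dep_def by blast
  qed
qed

lemma pr_shift: assumes d: "dep m E" shows "pr (\<lambda>\<omega>. E (sh k0 \<omega>)) = pr E"
proof -
  have "pr (\<lambda>\<omega>. E (sh k0 \<omega>)) = card {f\<in>Om m. E (sh k0 f)} / 2^m"
    unfolding pr_def by (rule cyl(2)[OF dep_sh[OF d]])
  also have "\<dots> = card {f\<in>Om m. E f} / 2^m" using count_shift[OF d, of k0] by simp
  also have "\<dots> = pr E" unfolding pr_def by (rule cyl(2)[OF d, symmetric])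
  finally show ?thesis .
qed

lemma rec_generic:
  fixes P :: "nat \<Rightarrow> real" and f :: "nat \<Rightarrow> nat" and q L :: nat
  assumes q: "q \<ge> 4" and L: "L \<ge> 1"
    and base: "\<And>n. n \<le> L \<Longrightarrow> P n \<le> 0"
    and st1: "\<And>n. L < n \<Longrightarrow> f n < n"
    and st2: "\<And>n. L < n \<Longrightarrow> q * f n \<le> (q - 1) * n"
    and st3: "\<And>n. L < n \<Longrightarrow> P n \<le> real q ^ 2 / (2 * n) + P (f n)"
  shows "P n \<le> (real q ^ 2 / 2) * (if n \<le> L then 0 else real q / L - (real q - 1) / n)"
proof (induction n rule: less_induct)
  case (less n)
  show ?case
  proof (cases "n \<le> L")
    case True then show ?thesis using base by simp
  next
    case False
    then have nL: "L < n" by simp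
    have npos: "real n > 0" using nL L by simp
    have Lpos: "real L > 0" using L by simp
    have IH: "P (f n) \<le> (real q ^ 2 / 2) * (if f n \<le> L then 0 else real q / L - (real q - 1) / f n)"
      using less.IH st1[OF nL] by blast
    have key: "1 / n + (if f n \<le> L then 0 else real q / L - (real q - 1) / f n) \<le> real q / L - (real q - 1) / n"
    proof (cases "f n \<le> L")
      case True
      have "real q / n \<le> real q / L" using nL Lpos q by (intro divide_left_mono) auto
      then have "1 / n + (real q - 1) / n \<le> real q / L" by (simp add: add_divide_distrib[symmetric])
      then show ?thesis using True by simp
    next
      case False
      then have fpos: "real (f n) > 0" using L by simp
      have "real (q * f n) \<le> real ((q - 1) * n)" using st2[OF nL] by (simp only: of_nat_le_iff)
      then have h: "real q * f n \<le> (real q - 1) * n" using q by (simp add: of_nat_diff)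
      have "real q / n \<le> (real q - 1) / f n"
        using h npos fpos by (simp add: divide_le_eq le_divide_eq mult.commute)
      then have "1 / n + (real q - 1) / n \<le> (real q - 1) / f n" by (simp add: add_divide_distrib[symmetric])
      then show ?thesis using False by simp
    qed
    have "P n \<le> real q ^ 2 / (2 * n) + P (f n)" by (rule st3[OF nL])
    also have "\<dots> \<le> real q ^ 2 / (2 * n) + (real q ^ 2 / 2) * (if f n \<le> L then 0 else real q / L - (real q - 1) / f n)"
      using IH by simp
    also have "\<dots> = (real q ^ 2 / 2) * (1 / n + (if f n \<le> L then 0 else real q / L - (real q - 1) / f n))"
      by (simp add: field_simps)
    also have "\<dots> \<le> (real q ^ 2 / 2) * (real q / L - (real q - 1) / n)"
      using key by (intro mult_left_mono) auto
    finally show ?thesis using False by simp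
  qed
qed

lemma rec_generic':
  fixes P :: "nat \<Rightarrow> real" and f :: "nat \<Rightarrow> nat" and q L :: nat
  assumes q: "q \<ge> 4" and L: "L \<ge> 1"
    and base: "\<And>n. n \<le> L \<Longrightarrow> P n \<le> 0"
    and st1: "\<And>n. L < n \<Longrightarrow> f n < n"
    and st2: "\<And>n. L < n \<Longrightarrow> q * f n \<le> (q - 1) * n"
    and st3: "\<And>n. L < n \<Longrightarrow> P n \<le> real q ^ 2 / (2 * n) + P (f n)"
  shows "P n \<le> real q ^ 3 / (2 * L)"
proof -
  have "P n \<le> (real q ^ 2 / 2) * (if n \<le> L then 0 else real q / L - (real q - 1) / n)"
    by (rule rec_generic[OF assms])
  also have "\<dots> \<le> (real q ^ 2 / 2) * (real q / L)"
    using q L by (intro mult_left_mono) auto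
  also have "\<dots> = real q ^ 3 / (2 * L)" by (simp add: power_def)
  finally show ?thesis .
qed

lemma level_lo:
  assumes q: "q \<ge> 3" and n: "n \<ge> 1"
  shows "pr (\<lambda>\<omega>. walk \<omega> n n < lo q n) \<le> real q ^ 2 / (2 * n)"
proof -
  interpret binomial_distribution n "1/2" by unfold_locales auto
  have "pr (\<lambda>\<omega>. walk \<omega> n n < lo q n) = measure_pmf.prob (binomial_pmf n (1/2)) {x. x < lo q n}"
    by (rule pr_walk_count)
  also have "\<dots> \<le> measure_pmf.prob (binomial_pmf n (1/2)) {x. x / n \<le> 1/2 - 1/q}"
  proof (rule measure_pmf.finite_measure_mono)
    show "{x. x < lo q n} \<subseteq> {x. x / n \<le> 1/2 - 1/q}"
    proof
      fix x assume "x \<in> {x. x < lo q n}"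
      then have "x + 1 \<le> lo q n" by simp
      then have "(x + 1) * (2 * q) \<le> (q - 2) * n + 2 * q - 1"
        unfolding lo_def using q by (subst (asm) less_eq_div_iff_mult_less_eq) auto
      then have "x * (2 * q) \<le> (q - 2) * n" by (simp add: algebra_simps)
      then have "real (x * (2 * q)) \<le> real ((q - 2) * n)" by (simp only: of_nat_le_iff)
      then have "real x * (2 * q) \<le> (real q - 2) * n" using q by (simp add: of_nat_diff)
      then have "x \<le> (1/2 - 1/q) * n" using q by (simp add: field_simps)
      then show "x \<in> {x. x / n \<le> 1/2 - 1/q}" using n by (simp add: field_simps)
    qed
  qed simp
  also have "\<dots> \<le> exp (- 2 * n * (1/q)^2)"
    by (rule prob_le') (use n in auto)
  also have "\<dots> \<le> 1 / (2 * n * (1/q)^2)"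
    using exp_neg_le[of "2 * n * (1/q)^2"] n q by simp
  also have "\<dots> = real q ^ 2 / (2 * n)" by (simp add: field_simps)
  finally show ?thesis .
qed

definition Tup :: "nat \<Rightarrow> nat \<Rightarrow> nat \<Rightarrow> nat" where
  "Tup q B n = (2 * q * n) div (q - 2) + B"

definition Tlo :: "nat \<Rightarrow> nat \<Rightarrow> nat \<Rightarrow> nat" where
  "Tlo q L n = (2 * q * (n - L)) div (q + 2)"

lemma dep_mono: "m \<le> m' \<Longrightarrow> dep m E \<Longrightarrow> dep m' E"
  unfolding dep_def by auto

lemma dep_or: "dep m A \<Longrightarrow> dep m C \<Longrightarrow> dep m (\<lambda>\<omega>. A \<omega> \<or> C \<omega>)"
  unfolding dep_def by metis

lemma dep_and: "dep m A \<Longrightarrow> dep m C \<Longrightarrow> dep m (\<lambda>\<omega>. A \<omega> \<and> C \<omega>)"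
  unfolding dep_def by metis

lemma dep_sh_walk: "dep n1 (\<lambda>\<omega>. P (walk (sh k0 \<omega>) n1 k))"
  by (rule dep_sh[OF dep_walk])

lemma up_facts:
  assumes q: "q \<ge> 4" and n: "n \<ge> 1"
  shows "up q n < n" "q * up q n \<le> (q - 1) * n" "2 * q * up q n \<le> (q + 2) * n"
proof -
  have d: "up q n * (2 * q) \<le> (q + 2) * n"
    unfolding up_def using q by (subst less_eq_div_iff_mult_less_eq[symmetric]) auto
  then show "2 * q * up q n \<le> (q + 2) * n" by (simp add: mult.commute)
  have "(q + 2) * n \<le> 2 * (q - 1) * n" using q by (intro mult_le_mono1) auto
  with d have "2 * (q * up q n) \<le> 2 * ((q - 1) * n)" by (simp add: algebra_simps)
  then show "q * up q n \<le> (q - 1) * n" by simp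
  have "n * 4 \<le> n * q" using q by simp
  then have "n + n < n * q" using n by linarith
  then have "(q + 2) * n < n * (2 * q)" by (simp add: algebra_simps)
  then show "up q n < n" unfolding up_def using q by (subst div_less_iff_less_mult) auto
qed

lemma Tup_step:
  assumes q: "q \<ge> 4" and n: "n \<ge> 1"
  shows "n + Tup q B (up q n) \<le> Tup q B n"
proof -
  have q2: "q - 2 \<noteq> 0" using q by simp
  have "(2 * q * up q n) div (q - 2) \<le> ((q + 2) * n) div (q - 2)"
    using up_facts(3)[OF q n] by (rule div_le_mono)
  moreover have "(2 * q * n) div (q - 2) = n + ((q + 2) * n) div (q - 2)"
  proof -
    obtain q' where q': "q = q' + 4" using q le_Suc_ex by (metis add.commute)
    have "2 * q * n = (q + 2) * n + n * (q - 2)" unfolding q' by (simp add: algebra_simps)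
    then have "(2 * q * n) div (q - 2) = ((q + 2) * n + n * (q - 2)) div (q - 2)" by (rule arg_cong)
    also have "\<dots> = n + ((q + 2) * n) div (q - 2)" by (rule div_mult_self1[OF q2])
    finally show ?thesis .
  qed
  ultimately show ?thesis unfolding Tup_def by simp
qed

lemma up_bound:
  assumes q: "q \<ge> 4" and L: "L \<ge> 1" and B: "\<And>\<omega>. walk \<omega> L B = 0"
  shows "pr (\<lambda>\<omega>. walk \<omega> n (Tup q B n) \<noteq> 0) \<le> real q ^ 3 / (2 * L)"
proof (rule rec_generic'[OF q L, where f = "up q" and P = "\<lambda>n. pr (\<lambda>\<omega>. walk \<omega> n (Tup q B n) \<noteq> 0)"])
  fix n assume nL: "n \<le> L"
  have "walk \<omega> n (Tup q B n) = 0" for \<omega>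
  proof -
    have "walk \<omega> L (Tup q B n) = 0" by (rule walk_zero_after[OF B]) (simp add: Tup_def)
    then show ?thesis using walk_mono_start[OF nL, of \<omega> "Tup q B n"] by simp
  qed
  then show "pr (\<lambda>\<omega>. walk \<omega> n (Tup q B n) \<noteq> 0) \<le> 0" by (simp add: pr_false)
next
  fix n assume "L < n"
  then have n: "n \<ge> 1" using L by simp
  show "up q n < n" "q * up q n \<le> (q - 1) * n" using up_facts[OF q n] by auto
  define n1 where "n1 = up q n"
  have pw: "up q n < walk \<omega> n n \<or> walk (sh n \<omega>) n1 (Tup q B n1) \<noteq> 0"
    if "walk \<omega> n (Tup q B n) \<noteq> 0" for \<omega>
  proof (rule ccontr)
    assume "\<not> (up q n < walk \<omega> n n \<or> walk (sh n \<omega>) n1 (Tup q B n1) \<noteq> 0)"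
    then have a: "walk \<omega> n n \<le> n1" "walk (sh n \<omega>) n1 (Tup q B n1) = 0" unfolding n1_def by auto
    have "walk \<omega> n (n + Tup q B n1) = walk (sh n \<omega>) (walk \<omega> n n) (Tup q B n1)" by (rule walk_sh)
    also have "\<dots> \<le> walk (sh n \<omega>) n1 (Tup q B n1)" by (rule walk_mono_start[OF a(1)])
    finally have "walk \<omega> n (n + Tup q B n1) = 0" using a(2) by simp
    then have "walk \<omega> n (Tup q B n) = 0"
      by (rule walk_zero_after) (use Tup_step[OF q n, of B] n1_def in simp)
    with that show False by simp
  qed
  have n1n: "n1 \<le> n" using up_facts[OF q n] n1_def by simp
  have dA: "dep n (\<lambda>\<omega>. up q n < walk \<omega> n n)" by (rule dep_walk)
  have dC: "dep n (\<lambda>\<omega>. walk (sh n \<omega>) n1 (Tup q B n1) \<noteq> 0)"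
    by (rule dep_mono[OF n1n dep_sh_walk])
  have "pr (\<lambda>\<omega>. walk \<omega> n (Tup q B n) \<noteq> 0) \<le> pr (\<lambda>\<omega>. up q n < walk \<omega> n n \<or> walk (sh n \<omega>) n1 (Tup q B n1) \<noteq> 0)"
    by (rule pr_mono[OF dep_or[OF dA dC]]) (use pw in auto)
  also have "\<dots> \<le> pr (\<lambda>\<omega>. up q n < walk \<omega> n n) + pr (\<lambda>\<omega>. walk (sh n \<omega>) n1 (Tup q B n1) \<noteq> 0)"
    by (rule pr_union[OF dA dC])
  also have "pr (\<lambda>\<omega>. walk (sh n \<omega>) n1 (Tup q B n1) \<noteq> 0) = pr (\<lambda>\<omega>. walk \<omega> n1 (Tup q B n1) \<noteq> 0)"
    by (rule pr_shift[OF dep_walk])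
  also have "pr (\<lambda>\<omega>. up q n < walk \<omega> n n) \<le> real q ^ 2 / (2 * n)"
    by (rule level_up) (use q n in auto)
  finally show "pr (\<lambda>\<omega>. walk \<omega> n (Tup q B n) \<noteq> 0) \<le> real q ^ 2 / (2 * n) + pr (\<lambda>\<omega>. walk \<omega> (up q n) (Tup q B (up q n)) \<noteq> 0)"
    unfolding n1_def by simp
qed

lemma lo_facts:
  assumes q: "q \<ge> 4" and n: "n \<ge> 2"
  shows "lo q n < n" "q * lo q n \<le> (q - 1) * n" "(q - 2) * n \<le> 2 * q * lo q n" "1 \<le> lo q n"
proof -
  obtain q' where q': "q = q' + 4" using q le_Suc_ex by (metis add.commute)
  obtain n' where n': "n = n' + 2" using n le_Suc_ex by (metis add.commute)
  define X where "X = (q - 2) * n + 2 * q - 1"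
  have lo: "lo q n = X div (2 * q)" unfolding lo_def X_def ..
  have d: "lo q n * (2 * q) \<le> X" unfolding lo using q by (subst less_eq_div_iff_mult_less_eq[symmetric]) auto
  have m: "X = lo q n * (2 * q) + X mod (2 * q)" unfolding lo by (rule div_mult_mod_eq[symmetric])
  have r: "X mod (2 * q) < 2 * q" using q by simp
  have X': "X = q' * n' + 2 * q' + 2 * n' + q' * 2 + 11" unfolding X_def q' n' by (simp add: algebra_simps)
  show "lo q n < n" unfolding lo using q
    by (subst div_less_iff_less_mult) (auto simp: X' q' n' algebra_simps)
  have "2 * (q * lo q n) \<le> 2 * ((q - 1) * n)"
  proof -
    have "2 * (q * lo q n) = lo q n * (2 * q)" by simp
    also have "\<dots> \<le> X" by (rule d)
    also have "X \<le> 2 * ((q - 1) * n)" unfolding X' q' n' by (simp add: algebra_simps)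
    finally show ?thesis .
  qed
  then show "q * lo q n \<le> (q - 1) * n" by simp
  have "X < lo q n * (2 * q) + 2 * q" using m r by linarith
  then have "(q - 2) * n + 2 * q < lo q n * (2 * q) + 2 * q + 1" unfolding X_def using q by simp
  then show "(q - 2) * n \<le> 2 * q * lo q n" by (simp add: algebra_simps)
  show "1 \<le> lo q n" unfolding lo using q
    by (subst less_eq_div_iff_mult_less_eq) (auto simp: X' q')
qed

lemma Tlo_step:
  assumes q: "q \<ge> 4" and n: "n \<ge> 2" and nL: "L < n"
  shows "Tlo q L n \<le> n + Tlo q L (lo q n)"
proof -
  define a where "a = lo q n"
  have h: "(q - 2) * n \<le> 2 * q * a" using lo_facts(3)[OF q n] a_def by simp
  have q2: "q + 2 \<noteq> 0" by simp
  have ineq: "2 * q * (n - L) \<le> 2 * q * (a - L) + n * (q + 2)"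
  proof (cases "L \<le> a")
    case True
    have "int (2 * q * (n - L)) = 2 * int q * int n - 2 * int q * int L" using nL by (simp add: of_nat_diff algebra_simps)
    moreover have "int (2 * q * (a - L)) = 2 * int q * int a - 2 * int q * int L" using True by (simp add: of_nat_diff algebra_simps)
    moreover have "int ((q - 2) * n) = int q * int n - 2 * int n" using q by (simp add: of_nat_diff algebra_simps)
    moreover have "int ((q - 2) * n) \<le> 2 * int q * int a" using h by (metis of_nat_le_iff of_nat_mult of_nat_numeral)
    ultimately have "int (2 * q * (n - L)) \<le> int (2 * q * (a - L) + n * (q + 2))" by (simp add: algebra_simps)
    then show ?thesis by (simp only: of_nat_le_iff)
  next
    case False
    have "int (2 * q * (n - L)) = 2 * int q * int n - 2 * int q * int L" using nL by (simp add: of_nat_diff algebra_simps)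
    moreover have "int ((q - 2) * n) = int q * int n - 2 * int n" using q by (simp add: of_nat_diff algebra_simps)
    moreover have "int ((q - 2) * n) \<le> 2 * int q * int a" using h by (metis of_nat_le_iff of_nat_mult of_nat_numeral)
    moreover have "int q * int a \<le> int q * int L" using False by (intro mult_left_mono) auto
    ultimately have "int (2 * q * (n - L)) \<le> int (n * (q + 2))" by (simp add: algebra_simps)
    then show ?thesis by (simp only: of_nat_le_iff)
  qed
  have "Tlo q L n \<le> (2 * q * (a - L) + n * (q + 2)) div (q + 2)"
    unfolding Tlo_def by (rule div_le_mono[OF ineq])
  also have "\<dots> = n + Tlo q L a" unfolding Tlo_def by (rule div_mult_self1[OF q2])
  finally show ?thesis unfolding a_def .
qed

lemma lo_bound:
  assumes q: "q \<ge> 4" and L: "L \<ge> 1"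
  shows "pr (\<lambda>\<omega>. 1 \<le> n \<and> walk \<omega> n (Tlo q L n) = 0) \<le> real q ^ 3 / (2 * L)"
proof (rule rec_generic'[OF q L, where f = "lo q" and P = "\<lambda>n. pr (\<lambda>\<omega>. 1 \<le> n \<and> walk \<omega> n (Tlo q L n) = 0)"])
  fix n assume nL: "n \<le> L"
  then have "Tlo q L n = 0" unfolding Tlo_def by simp
  then show "pr (\<lambda>\<omega>. 1 \<le> n \<and> walk \<omega> n (Tlo q L n) = 0) \<le> 0" by (simp add: pr_false)
next
  fix n assume nL: "L < n"
  then have n: "n \<ge> 2" using L by simp
  show "lo q n < n" "q * lo q n \<le> (q - 1) * n" using lo_facts[OF q n] by auto
  define n1 where "n1 = lo q n"
  have n11: "1 \<le> n1" using lo_facts(4)[OF q n] n1_def by simp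
  have pw: "walk \<omega> n n < lo q n \<or> (1 \<le> n1 \<and> walk (sh n \<omega>) n1 (Tlo q L n1) = 0)"
    if "1 \<le> n \<and> walk \<omega> n (Tlo q L n) = 0" for \<omega>
  proof (rule ccontr)
    assume "\<not> (walk \<omega> n n < lo q n \<or> (1 \<le> n1 \<and> walk (sh n \<omega>) n1 (Tlo q L n1) = 0))"
    then have a: "n1 \<le> walk \<omega> n n" "walk (sh n \<omega>) n1 (Tlo q L n1) \<noteq> 0" using n11 unfolding n1_def by auto
    have "walk (sh n \<omega>) n1 (Tlo q L n1) \<le> walk (sh n \<omega>) (walk \<omega> n n) (Tlo q L n1)" by (rule walk_mono_start[OF a(1)])
    also have "\<dots> = walk \<omega> n (n + Tlo q L n1)" by (rule walk_sh[symmetric])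
    also have "\<dots> \<le> walk \<omega> n (Tlo q L n)"
      by (rule walk_antimono) (use Tlo_step[OF q n nL] n1_def in simp)
    finally show False using a(2) that by simp
  qed
  have n1n: "n1 \<le> n" using lo_facts[OF q n] n1_def by simp
  have dA: "dep n (\<lambda>\<omega>. walk \<omega> n n < lo q n)" by (rule dep_walk)
  have dC: "dep n (\<lambda>\<omega>. 1 \<le> n1 \<and> walk (sh n \<omega>) n1 (Tlo q L n1) = 0)"
    by (rule dep_mono[OF n1n dep_sh_walk])
  have "pr (\<lambda>\<omega>. 1 \<le> n \<and> walk \<omega> n (Tlo q L n) = 0) \<le> pr (\<lambda>\<omega>. walk \<omega> n n < lo q n \<or> (1 \<le> n1 \<and> walk (sh n \<omega>) n1 (Tlo q L n1) = 0))"
    by (rule pr_mono[OF dep_or[OF dA dC]]) (use pw in auto)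
  also have "\<dots> \<le> pr (\<lambda>\<omega>. walk \<omega> n n < lo q n) + pr (\<lambda>\<omega>. 1 \<le> n1 \<and> walk (sh n \<omega>) n1 (Tlo q L n1) = 0)"
    by (rule pr_union[OF dA dC])
  also have "pr (\<lambda>\<omega>. 1 \<le> n1 \<and> walk (sh n \<omega>) n1 (Tlo q L n1) = 0) = pr (\<lambda>\<omega>. 1 \<le> n1 \<and> walk \<omega> n1 (Tlo q L n1) = 0)"
    by (rule pr_shift[OF dep_walk])
  also have "pr (\<lambda>\<omega>. walk \<omega> n n < lo q n) \<le> real q ^ 2 / (2 * n)"
    by (rule level_lo) (use q n in auto)
  finally show "pr (\<lambda>\<omega>. 1 \<le> n \<and> walk \<omega> n (Tlo q L n) = 0) \<le> real q ^ 2 / (2 * n) + pr (\<lambda>\<omega>. 1 \<le> lo q n \<and> walk \<omega> (lo q n) (Tlo q L (lo q n)) = 0)"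
    unfolding n1_def by simp
qed

definition Bnd :: "nat \<Rightarrow> nat" where
  "Bnd L = L * 2 ^ (LEAST M. L < 2 ^ M)"

lemma Bnd_walk: "walk \<omega> L (Bnd L) = 0"
proof -
  have "L < 2 ^ (LEAST M. L < 2 ^ M)" by (rule LeastI[of _ L]) (rule less_exp)
  then show ?thesis unfolding Bnd_def by (rule walk_bound)
qed

lemma Bnd_le: assumes "L \<ge> 1" shows "Bnd L \<le> 2 * L^2"
proof -
  define M where "M = (LEAST M. L < 2 ^ M)"
  have "M \<noteq> 0"
  proof
    assume "M = 0"
    then have "L < 2 ^ 0" unfolding M_def by (metis LeastI less_exp)
    with assms show False by simp
  qed
  then obtain M' where M': "M = Suc M'" by (cases M) auto
  have "\<not> L < 2 ^ M'" using not_less_Least[of M' "\<lambda>M. L < 2 ^ M"] M' unfolding M_def by simp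
  then have "2 ^ M \<le> 2 * L" using M' by simp
  then have "L * 2 ^ M \<le> L * (2 * L)" by (rule mult_le_mono2)
  then show ?thesis unfolding Bnd_def M_def[symmetric] by (simp add: power2_eq_square)
qed

definition Bad :: "nat \<Rightarrow> nat \<Rightarrow> (nat \<Rightarrow> bool) \<Rightarrow> bool" where
  "Bad q k \<omega> \<longleftrightarrow> walk \<omega> (k^6) (Tup q (Bnd (k^2)) (k^6)) \<noteq> 0 \<or>
      (1 \<le> k^6 \<and> walk \<omega> (k^6) (Tlo q (k^2) (k^6)) = 0)"

lemma dep_Bad: "dep (k^6) (Bad q k)"
  unfolding Bad_def[abs_def] by (intro dep_or dep_walk)

lemma pr_Bad:
  assumes q: "q \<ge> 4" and k: "k \<ge> 1"
  shows "pr (Bad q k) \<le> real q ^ 3 / real k ^ 2"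
proof -
  have L: "k^2 \<ge> 1" using k by simp
  have "pr (Bad q k) \<le> pr (\<lambda>\<omega>. walk \<omega> (k^6) (Tup q (Bnd (k^2)) (k^6)) \<noteq> 0) + pr (\<lambda>\<omega>. 1 \<le> k^6 \<and> walk \<omega> (k^6) (Tlo q (k^2) (k^6)) = 0)"
    unfolding Bad_def by (rule pr_union[OF dep_walk dep_walk])
  also have "\<dots> \<le> real q ^ 3 / (2 * real (k^2)) + real q ^ 3 / (2 * real (k^2))"
    using up_bound[OF q L Bnd_walk, of "k^6"] lo_bound[OF q L, of "k^6"] by (intro add_mono) auto
  also have "\<dots> = real q ^ 3 / real k ^ 2" by simp
  finally show ?thesis .
qed

lemma AE_not_Bad:
  assumes q: "q \<ge> 4"
  shows "AE \<omega> in mu0. \<exists>K. \<forall>k\<ge>K. \<not> Bad q k \<omega>"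
proof -
  interpret finite_measure mu0 by (rule fm_mu0)
  define A where "A j = {\<omega> \<in> space mu0. Bad q (Suc j) \<omega>}" for j
  have As: "A j \<in> sets mu0" for j unfolding A_def by (rule pr_sets[OF dep_Bad])
  have mA: "measure mu0 (A j) \<le> real q ^ 3 * inverse (real (Suc j) ^ 2)" for j
    using pr_Bad[OF q, of "Suc j"] unfolding A_def pr_def by (simp add: divide_inverse)
  have "summable (\<lambda>j. inverse (real (Suc j) ^ 2))"
    using inverse_power_summable[of 2, where 'a=real] by (subst summable_Suc_iff) simp
  then have sg: "summable (\<lambda>j. real q ^ 3 * inverse (real (Suc j) ^ 2))" by (rule summable_mult)
  have "summable (\<lambda>j. measure mu0 (A j))"
    by (rule summable_comparison_test'[OF sg]) (use mA in simp)
  then have "AE \<omega> in mu0. eventually (\<lambda>j. \<omega> \<in> space mu0 - A j) sequentially"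
    by (intro borel_cantelli_AE1 As) (simp_all add: less_top[symmetric])
  then show ?thesis
  proof (rule AE_mp, intro AE_I2 impI)
    fix \<omega> assume "eventually (\<lambda>j. \<omega> \<in> space mu0 - A j) sequentially"
    then obtain J where J: "\<And>j. j \<ge> J \<Longrightarrow> \<omega> \<in> space mu0 - A j" unfolding eventually_sequentially by blast
    have "\<forall>k\<ge>Suc J. \<not> Bad q k \<omega>"
    proof (intro allI impI)
      fix k assume "Suc J \<le> k"
      then obtain j where j: "k = Suc j" "J \<le> j" by (cases k) auto
      then show "\<not> Bad q k \<omega>" using J[of j] unfolding A_def by auto
    qed
    then show "\<exists>K. \<forall>k\<ge>K. \<not> Bad q k \<omega>" by blast
  qed
qed

definition tw :: "(nat \<Rightarrow> bool) \<Rightarrow> nat \<Rightarrow> nat" where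
  "tw \<omega> n = (LEAST j. walk \<omega> n j = 0)"

lemma div_real_bounds:
  assumes b: "b > 0"
  shows "real (a div b) \<le> real a / real b" "real a / real b - 1 \<le> real (a div b)"
proof -
  have e: "real a = real (a div b) * real b + real (a mod b)"
    by (metis div_mult_mod_eq of_nat_add of_nat_mult)
  have r: "real (a mod b) < real b" using b by simp
  have bp: "real b > 0" using b by simp
  show "real (a div b) \<le> real a / real b" using e bp by (simp add: field_simps)
  show "real a / real b - 1 \<le> real (a div b)" using e r bp by (simp add: field_simps)
qed

lemma tw_bounds:
  assumes q: "q \<ge> 4" and good: "\<And>k. k \<ge> K \<Longrightarrow> \<not> Bad q k \<omega>" and kK: "K \<le> k" and k1: "1 \<le> k"
    and n1: "k^6 \<le> n" and n2: "n \<le> (Suc k)^6"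
  shows "tw \<omega> n \<le> Tup q (Bnd ((Suc k)^2)) ((Suc k)^6)" "Tlo q (k^2) (k^6) < tw \<omega> n"
proof -
  define U where "U = Tup q (Bnd ((Suc k)^2)) ((Suc k)^6)"
  have "walk \<omega> ((Suc k)^6) U = 0" using good[of "Suc k"] kK unfolding Bad_def U_def by auto
  then have wU: "walk \<omega> n U = 0" using walk_mono_start[OF n2, of \<omega> U] by simp
  then show "tw \<omega> n \<le> Tup q (Bnd ((Suc k)^2)) ((Suc k)^6)" unfolding tw_def U_def by (rule Least_le)
  have w0: "walk \<omega> n (tw \<omega> n) = 0" unfolding tw_def using wU by (rule LeastI)
  define D where "D = Tlo q (k^2) (k^6)"
  have wD: "walk \<omega> (k^6) D \<noteq> 0" using good[of k] kK k1 unfolding Bad_def D_def by auto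
  show "Tlo q (k^2) (k^6) < tw \<omega> n"
  proof (rule ccontr)
    assume "\<not> Tlo q (k^2) (k^6) < tw \<omega> n"
    then have "tw \<omega> n \<le> D" unfolding D_def by simp
    then have "walk \<omega> (k^6) D \<le> walk \<omega> (k^6) (tw \<omega> n)" by (rule walk_antimono)
    also have "\<dots> \<le> walk \<omega> n (tw \<omega> n)" by (rule walk_mono_start[OF n1])
    finally show False using w0 wD by simp
  qed
qed

definition fu :: "real \<Rightarrow> real \<Rightarrow> real" where
  "fu q k = (2 * q * (k + 1)^6 / (q - 2) + 2 * (k + 1)^4) / k^6"

definition gl :: "real \<Rightarrow> real \<Rightarrow> real" where
  "gl q k = (2 * q * (k^6 - k^2) / (q + 2) - 1) / (k + 1)^6"

lemma tw_real_bounds: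
  assumes q: "q \<ge> 4" and good: "\<And>k. k \<ge> K \<Longrightarrow> \<not> Bad q k \<omega>" and kK: "K \<le> k" and k1: "1 \<le> k"
    and n1: "k^6 \<le> n" and n2: "n \<le> (Suc k)^6"
  shows "real (tw \<omega> n) / n \<le> fu q k" "gl q k \<le> real (tw \<omega> n) / n"
proof -
  note tb = tw_bounds[OF q good kK k1 n1 n2]
  have kp: "real k > 0" using k1 by simp
  have "1 \<le> k^6" using k1 by simp
  then have "1 \<le> n" using n1 by linarith
  then have npos: "real n > 0" by simp
  have "real (k^6) \<le> real n" using n1 by (simp only: of_nat_le_iff)
  then have nk: "real k ^ 6 \<le> real n" by simp
  have "real n \<le> real ((Suc k)^6)" using n2 by (simp only: of_nat_le_iff)
  then have nk2: "real n \<le> (real k + 1) ^ 6" by (simp add: add.commute)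
  have q2: "q - 2 > 0" "q + 2 > 0" using q by auto
  have "real (tw \<omega> n) \<le> real (Tup q (Bnd ((Suc k)^2)) ((Suc k)^6))" using tb(1) by simp
  also have "\<dots> = real ((2 * q * (Suc k)^6) div (q - 2)) + real (Bnd ((Suc k)^2))" unfolding Tup_def by simp
  also have "\<dots> \<le> real (2 * q * (Suc k)^6) / real (q - 2) + real (2 * ((Suc k)^2)^2)"
    using div_real_bounds(1)[OF q2(1)] Bnd_le[of "(Suc k)^2"] by (intro add_mono) (auto simp del: of_nat_mult)
  also have "\<dots> = 2 * real q * (real k + 1)^6 / (real q - 2) + 2 * (real k + 1)^4"
    using q by (simp add: of_nat_diff power_mult[symmetric] add.commute)
  finally have up: "real (tw \<omega> n) \<le> 2 * real q * (real k + 1)^6 / (real q - 2) + 2 * (real k + 1)^4" .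
  have "real (tw \<omega> n) / n \<le> real (tw \<omega> n) / real k ^ 6"
    using nk kp npos by (intro divide_left_mono) auto
  also have "\<dots> \<le> fu q k" unfolding fu_def using up kp by (intro divide_right_mono) auto
  finally show "real (tw \<omega> n) / n \<le> fu q k" .
  have "2 * real q * (real k ^ 6 - real k ^ 2) / (real q + 2) - 1 \<le> real (Tlo q (k^2) (k^6))"
  proof -
    have kk: "k^2 \<le> k^6" using k1 by (intro power_increasing) auto
    have "real (2 * q * (k^6 - k^2)) / real (q + 2) - 1 \<le> real (Tlo q (k^2) (k^6))"
      unfolding Tlo_def by (rule div_real_bounds(2)) simp
    moreover have "real (2 * q * (k^6 - k^2)) = 2 * real q * (real k ^ 6 - real k ^ 2)"
      using kk by (simp add: of_nat_diff)
    moreover have "real (q + 2) = real q + 2" by simp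
    ultimately show ?thesis by metis
  qed
  also have "\<dots> \<le> real (tw \<omega> n)" using tb(2) by simp
  finally have lo: "2 * real q * (real k ^ 6 - real k ^ 2) / (real q + 2) - 1 \<le> real (tw \<omega> n)" .
  have "gl q k \<le> real (tw \<omega> n) / (real k + 1) ^ 6" unfolding gl_def using lo kp by (intro divide_right_mono) auto
  also have "\<dots> \<le> real (tw \<omega> n) / n" using nk2 npos by (intro divide_left_mono) auto
  finally show "gl q k \<le> real (tw \<omega> n) / n" .
qed

lemma fu_lim:
  assumes q: "q \<ge> 4"
  shows "(\<lambda>k. fu q (real k)) \<longlonglongrightarrow> 2 * real q / (real q - 2)"
proof -
  define r where "r k = real (Suc k) / real k" for k
  define i where "i k = 1 / real k" for k
  have r1: "r \<longlonglongrightarrow> 1" unfolding r_def by (rule LIMSEQ_Suc_n_over_n)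
  have i0: "i \<longlonglongrightarrow> 0" unfolding i_def by (rule lim_1_over_n)
  have "(\<lambda>k. (2 * real q / (real q - 2)) * r k ^ 6 + 2 * r k ^ 4 * i k ^ 2) \<longlonglongrightarrow>
        (2 * real q / (real q - 2)) * 1 ^ 6 + 2 * 1 ^ 4 * 0 ^ 2"
    by (intro tendsto_intros r1 i0)
  then have L: "(\<lambda>k. (2 * real q / (real q - 2)) * r k ^ 6 + 2 * r k ^ 4 * i k ^ 2) \<longlonglongrightarrow> 2 * real q / (real q - 2)"
    by simp
  have "eventually (\<lambda>k. (2 * real q / (real q - 2)) * r k ^ 6 + 2 * r k ^ 4 * i k ^ 2 = fu q (real k)) sequentially"
    unfolding eventually_sequentially
  proof (intro exI[of _ 1] allI impI)
    fix k :: nat assume "1 \<le> k"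
    then have kp: "real k > 0" by simp
    have q2: "real q - 2 \<noteq> 0" using q by simp
    show "(2 * real q / (real q - 2)) * r k ^ 6 + 2 * r k ^ 4 * i k ^ 2 = fu q (real k)"
      unfolding fu_def r_def i_def using kp q2 by (simp add: field_simps power_divide)
  qed
  then show ?thesis by (rule Lim_transform_eventually[OF L])
qed

lemma aux_div: "(c::real)*X*(Z/D) - Y*(Z/D) = (c*(X*Z) - Y*Z)/D"
  by (simp add: diff_divide_distrib)

lemma gl_ident: "(K::real) > 0 \<Longrightarrow> c * (1 - (1/K)^4) * (K/(K+1))^6 - (1/K)^6 * (K/(K+1))^6 = (c * (K^6 - K^2) - 1)/(K+1)^6"
proof -
  assume K: "K > 0"
  have a: "(K/(K+1))^6 = K^6/(K+1)^6" by (simp add: power_divide)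
  have b: "(1 - (1/K)^4) * K^6 = K^6 - K^2"
  proof -
    have "(1/K)^4 * K^6 = K^2" using K by (simp add: power_divide field_simps power_add[symmetric] numeral_eq_Suc)
    then show ?thesis by (simp add: algebra_simps)
  qed
  have c: "(1/K)^6 * K^6 = 1" using K by (simp add: power_divide)
  have "c * (1 - (1/K)^4) * (K/(K+1))^6 - (1/K)^6 * (K/(K+1))^6 = (c * ((1 - (1/K)^4) * K^6) - (1/K)^6 * K^6)/(K+1)^6"
    unfolding a by (rule aux_div)
  also have "\<dots> = (c * (K^6 - K^2) - 1)/(K+1)^6" unfolding b c ..
  finally show ?thesis .
qed

lemma gl_lim:
  assumes q: "q \<ge> 4"
  shows "(\<lambda>k. gl q (real k)) \<longlonglongrightarrow> 2 * real q / (real q + 2)"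
proof -
  define s where "s k = real k / (real k + 1)" for k
  define i where "i k = 1 / real k" for k
  have "s = (\<lambda>k. inverse (real (Suc k) / real k))" unfolding s_def by (auto simp: fun_eq_iff add.commute)
  then have s1: "s \<longlonglongrightarrow> 1" using tendsto_inverse[OF LIMSEQ_Suc_n_over_n] by simp
  have i0: "i \<longlonglongrightarrow> 0" unfolding i_def by (rule lim_1_over_n)
  have "(\<lambda>k. (2 * real q / (real q + 2)) * (1 - i k ^ 4) * s k ^ 6 - i k ^ 6 * s k ^ 6) \<longlonglongrightarrow>
        (2 * real q / (real q + 2)) * (1 - 0 ^ 4) * 1 ^ 6 - 0 ^ 6 * 1 ^ 6"
    by (intro tendsto_intros s1 i0)
  then have L: "(\<lambda>k. (2 * real q / (real q + 2)) * (1 - i k ^ 4) * s k ^ 6 - i k ^ 6 * s k ^ 6) \<longlonglongrightarrow> 2 * real q / (real q + 2)"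
    by simp
  have "eventually (\<lambda>k. (2 * real q / (real q + 2)) * (1 - i k ^ 4) * s k ^ 6 - i k ^ 6 * s k ^ 6 = gl q (real k)) sequentially"
    unfolding eventually_sequentially
  proof (intro exI[of _ 1] allI impI)
    fix k :: nat assume "1 \<le> k"
    then have kp: "real k > 0" by simp
    show "(2 * real q / (real q + 2)) * (1 - i k ^ 4) * s k ^ 6 - i k ^ 6 * s k ^ 6 = gl q (real k)"
      unfolding gl_def s_def i_def using gl_ident[OF kp, of "2 * real q / (real q + 2)"] by simp
  qed
  then show ?thesis by (rule Lim_transform_eventually[OF L])
qed

lemma find_k:
  assumes "K3 ^ 6 \<le> n"
  shows "\<exists>k\<ge>K3. k ^ 6 \<le> n \<and> n \<le> (Suc k) ^ 6"
proof -
  define k where "k = (LEAST k. n < (Suc k) ^ 6)"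
  have ex: "n < (Suc n) ^ 6"
  proof -
    have "Suc n ^ 1 \<le> (Suc n) ^ 6" by (rule power_increasing) auto
    then show ?thesis by simp
  qed
  have k1: "n < (Suc k) ^ 6" unfolding k_def using ex by (rule LeastI)
  have k2: "k ^ 6 \<le> n"
  proof (cases k)
    case 0 then show ?thesis by simp
  next
    case (Suc k')
    have "\<not> n < (Suc k') ^ 6" using not_less_Least[of k' "\<lambda>k. n < (Suc k) ^ 6"] Suc unfolding k_def by simp
    then show ?thesis using Suc by simp
  qed
  have k3: "K3 \<le> k"
  proof (rule ccontr)
    assume "\<not> K3 \<le> k"
    then have "Suc k \<le> K3" by simp
    then have "(Suc k) ^ 6 \<le> K3 ^ 6" by (rule power_mono) simp
    with k1 assms show False by simp
  qed
  show ?thesis using k1 k2 k3 by (intro exI[of _ k]) auto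
qed

lemma det_q:
  assumes q: "q \<ge> 4" and good: "\<exists>K. \<forall>k\<ge>K. \<not> Bad q k \<omega>"
  shows "eventually (\<lambda>n. real (tw \<omega> n) / n \<le> 2 * real q / (real q - 2) + 1 / q \<and>
                          2 * real q / (real q + 2) - 1 / q \<le> real (tw \<omega> n) / n) sequentially"
proof -
  obtain K where K: "\<And>k. k \<ge> K \<Longrightarrow> \<not> Bad q k \<omega>" using good by blast
  have qp: "1 / real q > 0" using q by simp
  have e1: "eventually (\<lambda>k. fu q (real k) < 2 * real q / (real q - 2) + 1 / q) sequentially"
    using order_tendstoD(2)[OF fu_lim[OF q]] qp by simp
  have e2: "eventually (\<lambda>k. 2 * real q / (real q + 2) - 1 / q < gl q (real k)) sequentially"
    using order_tendstoD(1)[OF gl_lim[OF q]] qp by simp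
  obtain K2 where K2: "\<And>k. k \<ge> K2 \<Longrightarrow> fu q (real k) < 2 * real q / (real q - 2) + 1 / q \<and>
      2 * real q / (real q + 2) - 1 / q < gl q (real k)"
    using eventually_conj[OF e1 e2] unfolding eventually_sequentially by blast
  define K3 where "K3 = max (max K K2) 1"
  show ?thesis unfolding eventually_sequentially
  proof (intro exI[of _ "K3 ^ 6"] allI impI)
    fix n assume "K3 ^ 6 \<le> n"
    then obtain k where k: "K3 \<le> k" "k ^ 6 \<le> n" "n \<le> (Suc k) ^ 6" using find_k by blast
    have kK: "K \<le> k" and k1: "1 \<le> k" and kK2: "K2 \<le> k" using k(1) unfolding K3_def by auto
    note b = tw_real_bounds[OF q K kK k1 k(2) k(3)]
    show "real (tw \<omega> n) / n \<le> 2 * real q / (real q - 2) + 1 / q \<and>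
          2 * real q / (real q + 2) - 1 / q \<le> real (tw \<omega> n) / n"
      using b K2[OF kK2] by auto
  qed
qed

lemma low_arith:
  fixes q a :: real
  assumes q: "q \<ge> 4" and h: "5 < (2 - a) * q"
  shows "a < 2 * q / (q + 2) - 1 / q"
proof -
  have e: "2 * q / (q + 2) = 2 - 4 / (q + 2)" using q by (simp add: field_simps)
  have "4 / (q + 2) \<le> 4 / q" using q by (intro divide_left_mono) auto
  moreover have "5 / q = 4 / q + 1 / q" by (simp add: add_divide_distrib[symmetric])
  ultimately have "2 - 5 / q \<le> 2 * q / (q + 2) - 1 / q" using e by linarith
  moreover have "a < 2 - 5 / q" using q h by (simp add: field_simps)
  ultimately show ?thesis by linarith
qed

lemma up_arith:
  fixes q a :: real
  assumes q: "q \<ge> 4" and h: "5 < (a - 2) * (q - 2)"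
  shows "2 * q / (q - 2) + 1 / q < a"
proof -
  have e: "2 * q / (q - 2) = 2 + 4 / (q - 2)" using q by (simp add: field_simps)
  have "1 / q \<le> 1 / (q - 2)" using q by (intro divide_left_mono) auto
  moreover have "5 / (q - 2) = 4 / (q - 2) + 1 / (q - 2)" by (simp add: add_divide_distrib[symmetric])
  ultimately have "2 * q / (q - 2) + 1 / q \<le> 2 + 5 / (q - 2)" using e by linarith
  moreover have "2 + 5 / (q - 2) < a" using q h by (simp add: field_simps)
  ultimately show ?thesis by linarith
qed

lemma conv:
  assumes H: "\<forall>q. 4 \<le> q \<longrightarrow> (\<exists>K. \<forall>k\<ge>K. \<not> Bad q k \<omega>)"
  shows "(\<lambda>n. real (tw \<omega> n) / real n) \<longlonglongrightarrow> 2"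
proof (rule order_tendstoI)
  fix a :: real assume a: "a < 2"
  obtain q0 :: nat where q0: "5 / (2 - a) < real q0" using reals_Archimedean2 by blast
  define q where "q = max q0 4"
  have q4: "4 \<le> q" unfolding q_def by simp
  have "5 / (2 - a) < real q" using q0 unfolding q_def by simp
  then have "5 < (2 - a) * real q" using a by (simp add: field_simps)
  then have lt: "a < 2 * real q / (real q + 2) - 1 / real q" using low_arith[of "real q" a] q4 by simp
  show "eventually (\<lambda>n. a < real (tw \<omega> n) / real n) sequentially"
    using det_q[OF q4 H[rule_format, OF q4]] by (rule eventually_mono) (use lt in auto)
next
  fix a :: real assume a: "2 < a"
  obtain q0 :: nat where q0: "2 + 5 / (a - 2) < real q0" using reals_Archimedean2 by blast
  define q where "q = max q0 4"
  have q4: "4 \<le> q" unfolding q_def by simp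
  have "2 + 5 / (a - 2) < real q" using q0 unfolding q_def by simp
  then have "5 / (a - 2) < real q - 2" by simp
  then have "5 < (a - 2) * (real q - 2)" using a by (simp add: field_simps)
  then have lt: "2 * real q / (real q - 2) + 1 / real q < a" using up_arith[of "real q" a] q4 by simp
  show "eventually (\<lambda>n. real (tw \<omega> n) / real n < a) sequentially"
    using det_q[OF q4 H[rule_format, OF q4]] by (rule eventually_mono) (use lt in auto)
qed

lemma dep_tw: "dep n (\<lambda>\<omega>. P (tw \<omega> n))"
  unfolding dep_def
proof (intro allI impI)
  fix \<omega> \<omega>' :: "nat \<Rightarrow> bool" assume a: "\<forall>i<n. \<omega> i = \<omega>' i"
  have "walk \<omega> n j = walk \<omega>' n j" for j by (rule walk_dep) (use a in simp)
  then show "P (tw \<omega> n) = P (tw \<omega>' n)" unfolding tw_def by simp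
qed

lemma meas_tw: "(\<lambda>\<omega>. tw \<omega> n) \<in> measurable mu0 (count_space UNIV)"
proof (subst measurable_count_space_eq2_countable, intro conjI ballI)
  fix a :: nat
  have "(\<lambda>\<omega>. tw \<omega> n) -` {a} \<inter> space mu0 = {\<omega> \<in> space mu0. tw \<omega> n = a}" by auto
  also have "\<dots> \<in> sets mu0" by (rule cyl(1)[OF dep_tw])
  finally show "(\<lambda>\<omega>. tw \<omega> n) -` {a} \<inter> space mu0 \<in> sets mu0" .
qed auto

lemma meas_ratio [measurable]: "(\<lambda>\<omega>. real (tw \<omega> n) / real n) \<in> borel_measurable mu0"
  by (rule measurable_compose[OF meas_tw]) simp

theorem main:
  "{\<omega> \<in> space mu0. (\<lambda>n. real (tau (xpow_mult n (Q0_elem \<omega>))) / real n) \<longlonglongrightarrow> 2} \<in> sets mu0 \<and>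
   emeasure mu0 {\<omega> \<in> space mu0. (\<lambda>n. real (tau (xpow_mult n (Q0_elem \<omega>))) / real n) \<longlonglongrightarrow> 2} = 1"
proof -
  have tt: "tau (xpow_mult n (Q0_elem \<omega>)) = tw \<omega> n" for n \<omega> unfolding tw_def by (rule tau_walk)
  define A where "A = {\<omega> \<in> space mu0. (\<lambda>n. real (tw \<omega> n) / real n) \<longlonglongrightarrow> 2}"
  have As: "A \<in> sets mu0" unfolding A_def by measurable
  have "AE \<omega> in mu0. \<forall>q. 4 \<le> q \<longrightarrow> (\<exists>K. \<forall>k\<ge>K. \<not> Bad q k \<omega>)"
  proof (subst AE_all_countable, intro allI)
    fix q :: nat
    show "AE \<omega> in mu0. 4 \<le> q \<longrightarrow> (\<exists>K. \<forall>k\<ge>K. \<not> Bad q k \<omega>)"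
    proof (cases "4 \<le> q")
      case True
      then show ?thesis using AE_not_Bad[OF True] by simp
    next
      case False
      then show ?thesis by simp
    qed
  qed
  then have "AE \<omega> in mu0. \<omega> \<in> A"
    by (rule AE_mp) (auto simp: A_def intro!: AE_I2 conv)
  then have "emeasure mu0 A = 1" by (rule prob_space.emeasure_eq_1_AE[OF prob_space_mu0 As])
  then show ?thesis using As unfolding A_def tt by simp
qed

theorem theorem2p16:
  defines "A \<equiv> {\<omega> \<in> space mu0.
     (\<lambda>n. real (tau (xpow_mult n (Q0_elem \<omega>))) / real n) \<longlonglongrightarrow> 2}"
  shows "A \<in> sets mu0 \<and> emeasure mu0 A = 1"
  unfolding A_def by (rule main)

end
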